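(* Let $A$ be the random matrix defined in the context. There is an absolute constant $c$ such that, with probability $1-o(1)$ as $k\to\infty$ (with $D\ge c\log k$), for every $\delta\ge c\sqrt{(\log k)/D}$ we have $1-\delta\le\lambda_\delta(A)\le1$.
   Context: Random instance: let $S_1,\dots,S_k\subseteq[D]$ be independent uniformly random subsets of $[D]$ (each element included independently with probability $1/2$), and let $A\in\mathbb{R}^{D\times k}$ have $A_{ij}=1/|S_j|$ if $i\in S_j$ and $A_{ij}=0$ otherwise. For a matrix $M$, $\|M\|_{\max}=\max_{i,j}|M_{ij}|$. For $\delta\ge 0$, $\lambda_\delta(A)$ is the optimal value of: minimize $\|B\|_{\max}$ over $B\in\mathbb{R}^{k\times D}$ subject to $\|BA-I_k\|_{\max}\le\delta$. *)

theory Defs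
  imports "HOL-Probability.Probability"
begin

text \<open>Matrices are functions nat => nat => real; an m x n matrix M uses entries M i j
  with i < m, j < n. Ground set [D] is rendered as {..<D}, indices of subsets as {..<k}.\<close>

definition maxnorm :: "nat \<Rightarrow> nat \<Rightarrow> (nat \<Rightarrow> nat \<Rightarrow> real) \<Rightarrow> real" where
  "maxnorm m n M = Max (insert 0 {\<bar>M i j\<bar> | i j. i < m \<and> j < n})"

definition subset_of :: "nat \<Rightarrow> (nat \<times> nat \<Rightarrow> bool) \<Rightarrow> nat \<Rightarrow> nat set" where
  "subset_of D X j = {i. i < D \<and> X (j, i)}"

definition matA :: "nat \<Rightarrow> (nat \<times> nat \<Rightarrow> bool) \<Rightarrow> nat \<Rightarrow> nat \<Rightarrow> real" where
  "matA D X i j = (if i \<in> subset_of D X j then 1 / real (card (subset_of D X j)) else 0)"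

definition rand_sets :: "nat \<Rightarrow> nat \<Rightarrow> (nat \<times> nat \<Rightarrow> bool) pmf" where
  "rand_sets D k = Pi_pmf ({..<k} \<times> {..<D}) False (\<lambda>_. bernoulli_pmf (1/2))"

definition feasible :: "nat \<Rightarrow> nat \<Rightarrow> (nat \<Rightarrow> nat \<Rightarrow> real) \<Rightarrow> real \<Rightarrow> (nat \<Rightarrow> nat \<Rightarrow> real) set" where
  "feasible D k A \<delta> = {B. maxnorm k k (\<lambda>j l. (\<Sum>i<D. B j i * A i l) - (if j = l then 1 else 0)) \<le> \<delta>}"

definition lambda_delta :: "nat \<Rightarrow> nat \<Rightarrow> (nat \<Rightarrow> nat \<Rightarrow> real) \<Rightarrow> real \<Rightarrow> real" where
  "lambda_delta D k A \<delta> = Inf (maxnorm k D ` feasible D k A \<delta>)"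

end

theory Submission imports Defs begin

lemma hoeff:
  fixes p q :: "nat \<Rightarrow> nat \<times> nat" and h :: "nat \<Rightarrow> bool \<Rightarrow> bool \<Rightarrow> real"
  assumes pq: "\<And>i. i < D \<Longrightarrow> p i \<in> {..<k}\<times>{..<D} \<and> q i \<in> {..<k}\<times>{..<D}"
    and dj: "disjoint_family_on (\<lambda>i. {p i, q i}) {..<D}"
    and hb: "\<And>i u v. 0 \<le> h i u v \<and> h i u v \<le> 1"
    and e: "\<epsilon> \<ge> 0" and D: "D > 0"
  shows "measure_pmf.prob (rand_sets D k)
     {X. \<bar>(\<Sum>i<D. h i (X (p i)) (X (q i))) - (\<Sum>i<D. measure_pmf.expectation (rand_sets D k) (\<lambda>X. h i (X (p i)) (X (q i))))\<bar> \<ge> \<epsilon>}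
     \<le> 2 * exp (-2 * \<epsilon>^2 / real D)"
proof -
  let ?M = "measure_pmf (rand_sets D k)"
  have ind0: "prob_space.indep_vars ?M (\<lambda>_. count_space UNIV) (\<lambda>x f. f x) ({..<k}\<times>{..<D})"
    unfolding rand_sets_def by (rule indep_vars_Pi_pmf) auto
  have ind1: "prob_space.indep_vars ?M (\<lambda>i. PiM {p i, q i} (\<lambda>_. count_space (UNIV::bool set)))
      (\<lambda>i \<omega>. restrict (\<lambda>x. \<omega> x) {p i, q i}) {..<D}"
    using prob_space.indep_vars_restrict[OF measure_pmf.prob_space_axioms ind0 _ dj] pq by auto
  have ind2: "prob_space.indep_vars ?M (\<lambda>_. borel)
      (\<lambda>i \<omega>. (\<lambda>f. h i (f (p i)) (f (q i))) (restrict (\<lambda>x. \<omega> x) {p i, q i})) {..<D}"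
  proof (rule prob_space.indep_vars_compose2[OF measure_pmf.prob_space_axioms ind1])
    fix i assume "i \<in> {..<D}"
    have m1: "(\<lambda>f. f (p i)) \<in> measurable (PiM {p i, q i} (\<lambda>_. count_space (UNIV::bool set))) (count_space UNIV)"
      by (rule measurable_component_singleton) auto
    have m2: "(\<lambda>f. f (q i)) \<in> measurable (PiM {p i, q i} (\<lambda>_. count_space (UNIV::bool set))) (count_space UNIV)"
      by (rule measurable_component_singleton) auto
    have "(\<lambda>f. (f (p i), f (q i))) \<in> measurable (PiM {p i, q i} (\<lambda>_. count_space (UNIV::bool set))) (count_space UNIV)"
    proof -
      have "(\<lambda>f. (f (p i), f (q i))) \<in> measurable (PiM {p i, q i} (\<lambda>_. count_space (UNIV::bool set))) (count_space (UNIV::bool set) \<Otimes>\<^sub>M count_space (UNIV::bool set))"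
        using m1 m2 by (simp add: measurable_pair_iff o_def)
      moreover have "count_space (UNIV::bool set) \<Otimes>\<^sub>M count_space (UNIV::bool set) = count_space UNIV"
        by (subst pair_measure_countable) (auto simp only: UNIV_Times_UNIV countable_finite finite_UNIV)
      ultimately show ?thesis by (simp only:)
    qed
    moreover have "(\<lambda>(u,v). h i u v) \<in> measurable (count_space UNIV) borel" by simp
    ultimately have "(\<lambda>(u,v). h i u v) \<circ> (\<lambda>f. (f (p i), f (q i))) \<in> measurable (PiM {p i, q i} (\<lambda>_. count_space (UNIV::bool set))) borel"
      by (rule measurable_comp)
    then show "(\<lambda>f. h i (f (p i)) (f (q i))) \<in> measurable (PiM {p i, q i} (\<lambda>_. count_space (UNIV::bool set))) borel"
      by (simp add: o_def)
  qed
  have ind: "prob_space.indep_vars ?M (\<lambda>_. borel) (\<lambda>i X. h i (X (p i)) (X (q i))) {..<D}"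
    using ind2 by (rule prob_space.indep_vars_cong[OF measure_pmf.prob_space_axioms, THEN iffD1, rotated -1]) auto
  interpret H: Hoeffding_ineq ?M "{..<D}" "\<lambda>i X. h i (X (p i)) (X (q i))" "\<lambda>_. 0" "\<lambda>_. 1"
     "\<Sum>i<D. measure_pmf.expectation (rand_sets D k) (\<lambda>X. h i (X (p i)) (X (q i)))"
    by unfold_locales (auto simp: ind hb)
  have "measure_pmf.prob (rand_sets D k) {x \<in> space ?M. \<bar>(\<Sum>i<D. h i (x (p i)) (x (q i))) - (\<Sum>i<D. measure_pmf.expectation (rand_sets D k) (\<lambda>X. h i (X (p i)) (X (q i))))\<bar> \<ge> \<epsilon>}
     \<le> 2 * exp (-2 * \<epsilon>\<^sup>2 / (\<Sum>i<D. (1 - 0)\<^sup>2))"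
    by (rule H.Hoeffding_ineq_abs_ge[OF e]) (use D in auto)
  then show ?thesis by simp
qed

lemma expect_prod:
  assumes P: "P \<subseteq> {..<k}\<times>{..<D}"
  shows "measure_pmf.expectation (rand_sets D k) (\<lambda>X. \<Prod>x\<in>P. of_bool (X x) :: real) = (1/2) ^ card P"
proof -
  let ?A = "{..<k}\<times>{..<D}"
  define f where "f x v = (if x \<in> P then of_bool v else (1::real))" for x v
  have fin: "finite ?A" by auto
  have eq: "(\<lambda>X. \<Prod>x\<in>P. of_bool (X x) :: real) = (\<lambda>X. \<Prod>x\<in>?A. f x (X x))"
  proof
    fix X :: "nat\<times>nat \<Rightarrow> bool"
    have "(\<Prod>x\<in>?A. f x (X x)) = (\<Prod>x\<in>P. f x (X x))"
      using P fin by (intro prod.mono_neutral_right) (auto simp: f_def)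
    also have "\<dots> = (\<Prod>x\<in>P. of_bool (X x))" by (intro prod.cong) (auto simp: f_def)
    finally show "(\<Prod>x\<in>P. of_bool (X x) :: real) = (\<Prod>x\<in>?A. f x (X x))" by simp
  qed
  have "measure_pmf.expectation (rand_sets D k) (\<lambda>X. \<Prod>x\<in>?A. f x (X x))
      = (\<Prod>x\<in>?A. measure_pmf.expectation (bernoulli_pmf (1/2)) (\<lambda>v. f x v))"
    unfolding rand_sets_def
    by (rule expectation_prod_Pi_pmf[OF fin]) (auto simp: f_def integrable_measure_pmf_finite)
  also have "\<dots> = (\<Prod>x\<in>?A. if x \<in> P then 1/2 else 1)"
    by (intro prod.cong) (auto simp: f_def)
  also have "\<dots> = (\<Prod>x\<in>P. 1/2)"
    using P fin by (subst prod.If_cases) (auto simp: Int_absorb1)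
  finally show ?thesis using eq by simp
qed

lemma maxnorm_fin: "finite {\<bar>M i j\<bar> | i j. i < (m::nat) \<and> j < (n::nat)}"
proof -
  have "{\<bar>M i j\<bar> | i j. i < m \<and> j < n} = (\<lambda>(i,j). \<bar>M i j\<bar>) ` ({..<m}\<times>{..<n})" by auto
  moreover have "finite ((\<lambda>(i,j). \<bar>M i j\<bar>) ` ({..<m}\<times>{..<n}))"
    by (intro finite_imageI finite_cartesian_product) auto
  ultimately show ?thesis by (simp only:)
qed

lemma maxnorm_ge: "i < m \<Longrightarrow> j < n \<Longrightarrow> \<bar>M i j\<bar> \<le> maxnorm m n M"
  unfolding maxnorm_def by (rule Max_ge) (use maxnorm_fin in auto)

lemma maxnorm_nonneg: "0 \<le> maxnorm m n M"
  unfolding maxnorm_def by (rule Max_ge) (use maxnorm_fin in auto)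

lemma maxnorm_le: "0 \<le> x \<Longrightarrow> (\<And>i j. i < m \<Longrightarrow> j < n \<Longrightarrow> \<bar>M i j\<bar> \<le> x) \<Longrightarrow> maxnorm m n M \<le> x"
  unfolding maxnorm_def by (subst Max_le_iff) (use maxnorm_fin in auto)

lemma card_subset_of: "real (card (subset_of D X l)) = (\<Sum>i<D. of_bool (X (l,i)))"
proof -
  have "subset_of D X l = {..<D} \<inter> {i. X (l,i)}" by (auto simp: subset_of_def)
  then show ?thesis by (simp add: sum_of_bool_eq)
qed

declare sum_of_bool_eq[simp del] sum_of_bool_mult_eq[simp del] sum_mult_of_bool_eq[simp del]

lemma determ:
  fixes X :: "nat \<times> nat \<Rightarrow> bool"
  assumes k: "0 < k" and Dp: "0 < D" and t: "0 \<le> t" and d: "t \<le> \<delta>"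
  and h1: "\<forall>l<k. \<bar>(\<Sum>i<D. of_bool (X(l,i))::real) - D/2\<bar> < D/4"
  and h3: "\<forall>j<k. \<forall>l<k. j\<noteq>l \<longrightarrow> \<bar>2 * (\<Sum>i<D. of_bool (X(l,i)) * of_bool(X(j,i)) :: real) - (\<Sum>i<D. of_bool (X(l,i))::real)\<bar> \<le> t * (\<Sum>i<D. of_bool (X(l,i))::real)"
  shows "feasible D k (matA D X) \<delta> \<noteq> {} \<and> 1-\<delta> \<le> lambda_delta D k (matA D X) \<delta> \<and> lambda_delta D k (matA D X) \<delta> \<le> 1"
proof -
  define s where "s l = (\<Sum>i<D. of_bool (X(l,i))::real)" for l
  define a where "a j l = (\<Sum>i<D. of_bool (X(l,i)) * of_bool(X(j,i)) :: real)" for j l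
  have spos: "s l > 0" if "l < k" for l proof -
    have "\<bar>s l - D/2\<bar> < D/4" using h1 that unfolding s_def by blast
    then show ?thesis using Dp by linarith
  qed
  have cs: "real (card (subset_of D X l)) = s l" for l by (simp add: card_subset_of s_def)
  have mA: "matA D X i l = of_bool (X(l,i)) / s l" if "i < D" for i l
    using that cs[of l] by (auto simp: matA_def subset_of_def)
  have sumA: "(\<Sum>i<D. B i * matA D X i l) = (\<Sum>i<D. B i * of_bool (X(l,i))) / s l" for B l
    by (simp add: mA sum_divide_distrib del: sum_of_bool_eq sum_of_bool_mult_eq sum_mult_of_bool_eq)
  define B0 where "B0 j i = 2 * of_bool (X(j,i)) - (1::real)" for j i
  have prodB: "(\<Sum>i<D. B0 j i * matA D X i l) = (2 * a j l - s l) / s l" for j l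
  proof -
    have "(\<Sum>i<D. B0 j i * of_bool (X(l,i))) = 2 * a j l - s l"
      unfolding a_def s_def B0_def sum_distrib_left sum_subtractf[symmetric]
      by (intro sum.cong) (auto simp del: sum_of_bool_eq sum_of_bool_mult_eq sum_mult_of_bool_eq)
    then show ?thesis by (simp add: sumA)
  qed
  have all: "a l l = s l" for l unfolding a_def s_def by (intro sum.cong) auto
  have B0f: "B0 \<in> feasible D k (matA D X) \<delta>"
    unfolding feasible_def mem_Collect_eq
  proof (rule maxnorm_le)
    show "0 \<le> \<delta>" using t d by simp
  next
    fix j l assume jl: "j < k" "l < k"
    show "\<bar>(\<Sum>i<D. B0 j i * matA D X i l) - (if j = l then 1 else 0)\<bar> \<le> \<delta>"
    proof (cases "j = l")
      case True
      have "(\<Sum>i<D. B0 j i * matA D X i l) = 1" unfolding prodB True all using spos[OF jl(2)] by simp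
      then show ?thesis using True t d by simp
    next
      case False
      have "\<bar>2 * a j l - s l\<bar> \<le> t * s l" using h3 jl False unfolding a_def s_def by blast
      then have "\<bar>(2 * a j l - s l) / s l\<bar> \<le> t" using spos[OF jl(2)]
        by (simp only: abs_divide) (simp add: pos_divide_le_eq)
      then show ?thesis using False d unfolding prodB by simp
    qed
  qed
  have B0n: "maxnorm k D B0 \<le> 1"
    by (rule maxnorm_le) (auto simp: B0_def)
  have ne: "feasible D k (matA D X) \<delta> \<noteq> {}" using B0f by auto
  have bdd: "bdd_below (maxnorm k D ` feasible D k (matA D X) \<delta>)"
    by (rule bdd_belowI[of _ 0]) (auto simp: maxnorm_nonneg)
  have up: "lambda_delta D k (matA D X) \<delta> \<le> 1"
    unfolding lambda_delta_def
    using cInf_lower[OF imageI[OF B0f] bdd] B0n by linarith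
  have low1: "1 - \<delta> \<le> maxnorm k D B" if B: "B \<in> feasible D k (matA D X) \<delta>" for B
  proof -
    have "\<bar>(\<Sum>i<D. B 0 i * matA D X i 0) - 1\<bar> \<le> \<delta>"
      using B maxnorm_ge[of 0 k 0 k "\<lambda>j l. (\<Sum>i<D. B j i * matA D X i l) - (if j = l then 1 else 0)"] k
      unfolding feasible_def by auto
    moreover have "(\<Sum>i<D. B 0 i * matA D X i 0) \<le> (\<Sum>i<D. maxnorm k D B * matA D X i 0)"
    proof (rule sum_mono)
      fix i assume "i \<in> {..<D}"
      then have "B 0 i \<le> maxnorm k D B" using maxnorm_ge[of 0 k i D B] k by auto
      moreover have "0 \<le> matA D X i 0" by (simp add: matA_def)
      ultimately show "B 0 i * matA D X i 0 \<le> maxnorm k D B * matA D X i 0" by (rule mult_right_mono)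
    qed
    moreover have "(\<Sum>i<D. maxnorm k D B * matA D X i 0) = maxnorm k D B"
    proof -
      have "(\<Sum>i<D. maxnorm k D B * matA D X i 0) = maxnorm k D B * (\<Sum>i<D. 1 * matA D X i 0)"
        by (simp add: sum_distrib_left)
      also have "(\<Sum>i<D. 1 * matA D X i 0) = s 0 / s 0"
        by (subst sumA) (simp add: s_def del: sum_of_bool_eq)
      also have "\<dots> = 1" using spos[OF k] by simp
      finally show ?thesis by simp
    qed
    ultimately show ?thesis by linarith
  qed
  have "1 - \<delta> \<le> lambda_delta D k (matA D X) \<delta>"
    unfolding lambda_delta_def
    by (rule cInf_greatest) (use ne low1 in auto)
  with ne up show ?thesis by simp
qed

lemma E1:
  assumes l: "l < k" and D: "0 < D" and e: "0 \<le> \<epsilon>"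
  shows "measure_pmf.prob (rand_sets D k) {X. \<epsilon> \<le> \<bar>(\<Sum>i<D. of_bool (X(l,i))::real) - real D/2\<bar>} \<le> 2 * exp (-2*\<epsilon>^2/real D)"
proof -
  have ex: "measure_pmf.expectation (rand_sets D k) (\<lambda>X. of_bool (X (l,i)) :: real) = 1/2" if "i \<in> {..<D}" for i
    using expect_prod[of "{(l,i)}" k D] l that by simp
  have sm: "(\<Sum>i<D. measure_pmf.expectation (rand_sets D k) (\<lambda>X. of_bool (X (l,i)) :: real)) = real D/2"
    by (subst sum.cong[OF refl ex]) auto
  have "measure_pmf.prob (rand_sets D k) {X. \<bar>(\<Sum>i<D. of_bool (X(l,i))::real) - (\<Sum>i<D. measure_pmf.expectation (rand_sets D k) (\<lambda>X. of_bool (X (l,i)) :: real))\<bar> \<ge> \<epsilon>} \<le> 2 * exp (-2*\<epsilon>^2/real D)"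
    by (rule hoeff[where p="\<lambda>i. (l,i)" and q="\<lambda>i.(l,i)" and h="\<lambda>i u v. of_bool u"]) (use l D e in \<open>auto simp: disjoint_family_on_def\<close>)
  then show ?thesis by (simp only: sm)
qed

lemma E3:
  assumes l: "l < k" and j: "j < k" and jl: "j \<noteq> l" and D: "0 < D" and e: "0 \<le> \<epsilon>"
  shows "measure_pmf.prob (rand_sets D k) {X. \<epsilon> \<le> \<bar>(\<Sum>i<D. of_bool (X(l,i)) * of_bool (X(j,i))::real) - real D/4\<bar>} \<le> 2 * exp (-2*\<epsilon>^2/real D)"
proof -
  have ex: "measure_pmf.expectation (rand_sets D k) (\<lambda>X. of_bool (X (l,i)) * of_bool (X(j,i)) :: real) = 1/4" if "i \<in> {..<D}" for i
    using expect_prod[of "{(l,i),(j,i)}" k D] l j jl that by simp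
  have sm: "(\<Sum>i<D. measure_pmf.expectation (rand_sets D k) (\<lambda>X. of_bool (X (l,i)) * of_bool (X(j,i)) :: real)) = real D/4"
    by (subst sum.cong[OF refl ex]) auto
  have "measure_pmf.prob (rand_sets D k) {X. \<bar>(\<Sum>i<D. of_bool (X(l,i)) * of_bool (X(j,i))::real) - (\<Sum>i<D. measure_pmf.expectation (rand_sets D k) (\<lambda>X. of_bool (X (l,i)) * of_bool (X(j,i)) :: real))\<bar> \<ge> \<epsilon>} \<le> 2 * exp (-2*\<epsilon>^2/real D)"
    by (rule hoeff[where p="\<lambda>i. (l,i)" and q="\<lambda>i.(j,i)" and h="\<lambda>i u v. of_bool u * of_bool v"]) (use l j D e in \<open>auto simp: disjoint_family_on_def\<close>)
  then show ?thesis by (simp only: sm)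
qed

lemma expk:
  assumes "0 < k" "3 * ln (real k) \<le> x"
  shows "exp (-x) \<le> 2 / real k ^ 3"
proof -
  have "exp (-x) \<le> exp (- (3 * ln (real k)))" using assms by simp
  also have "exp (- (3 * ln (real k))) = 1 / real k ^ 3"
    using assms by (simp add: exp_minus exp_of_nat_mult[of 3, simplified] inverse_eq_divide)
  also have "\<dots> \<le> 2 / real k ^ 3" using assms by (simp add: divide_right_mono)
  finally show ?thesis .
qed

theorem lemma6p2:
  "\<exists>c>0. \<forall>\<epsilon>>0. \<exists>K. \<forall>k\<ge>K. \<forall>D::nat. real D \<ge> c * ln (real k) \<longrightarrow>
     measure_pmf.prob (rand_sets D k)
       {X. \<forall>\<delta>\<ge>c * sqrt (ln (real k) / real D).
             feasible D k (matA D X) \<delta> \<noteq> {} \<and>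
             1 - \<delta> \<le> lambda_delta D k (matA D X) \<delta> \<and>
             lambda_delta D k (matA D X) \<delta> \<le> 1}
     \<ge> 1 - \<epsilon>"
proof (rule exI[of _ 64], intro conjI allI impI)
  fix \<epsilon> :: real assume \<epsilon>: "\<epsilon> > 0"
  define K where "K = max 3 (nat \<lceil>12/\<epsilon>\<rceil>)"
  show "\<exists>K. \<forall>k\<ge>K. \<forall>D::nat. real D \<ge> 64 * ln (real k) \<longrightarrow>
     measure_pmf.prob (rand_sets D k)
       {X. \<forall>\<delta>\<ge>64 * sqrt (ln (real k) / real D).
             feasible D k (matA D X) \<delta> \<noteq> {} \<and>
             1 - \<delta> \<le> lambda_delta D k (matA D X) \<delta> \<and>
             lambda_delta D k (matA D X) \<delta> \<le> 1}
     \<ge> 1 - \<epsilon>"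
  proof (intro exI[of _ K] allI impI)
    fix k D :: nat assume kK: "K \<le> k" and Dk: "64 * ln (real k) \<le> real D"
    let ?M = "rand_sets D k"
    have k3: "3 \<le> k" using kK by (simp add: K_def)
    have kpos: "0 < k" using k3 by simp
    have lnk: "0 < ln (real k)" using k3 by simp
    have Dpos: "0 < D" using Dk lnk by (metis mult_pos_pos of_nat_0_less_iff order_less_le_trans zero_less_numeral)
    have k12: "12 / \<epsilon> \<le> real k"
    proof -
      have "12/\<epsilon> \<le> real (nat \<lceil>12/\<epsilon>\<rceil>)" by linarith
      also have "\<dots> \<le> real k" using kK by (simp add: K_def)
      finally show ?thesis .
    qed
    have keps: "12 / real k \<le> \<epsilon>" using k12 \<epsilon> kpos by (simp add: divide_le_eq mult.commute pos_divide_le_eq)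
    define t where "t = 64 * sqrt (ln (real k) / real D)"
    have t0: "0 \<le> t" using lnk by (simp add: t_def)
    have tsq: "t^2 * real D = 4096 * ln (real k)"
      using lnk Dpos by (simp add: t_def power_mult_distrib)
    define s where "s X l = (\<Sum>i<D. of_bool (X(l,i))::real)" for X :: "nat\<times>nat\<Rightarrow>bool" and l
    define a where "a X j l = (\<Sum>i<D. of_bool (X(l,i)) * of_bool (X(j,i))::real)" for X :: "nat\<times>nat\<Rightarrow>bool" and j l
    define G where "G = {X. (\<forall>l<k. \<bar>s X l - real D/2\<bar> < real D/4) \<and> (\<forall>l<k. \<bar>s X l - real D/2\<bar> < t * real D/16)
        \<and> (\<forall>j<k. \<forall>l<k. j \<noteq> l \<longrightarrow> \<bar>a X j l - real D/4\<bar> < t * real D/16)}"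
    define T where "T = {X. \<forall>\<delta>\<ge>64 * sqrt (ln (real k) / real D).
             feasible D k (matA D X) \<delta> \<noteq> {} \<and>
             1 - \<delta> \<le> lambda_delta D k (matA D X) \<delta> \<and>
             lambda_delta D k (matA D X) \<delta> \<le> 1}"
    have GT: "G \<subseteq> T"
    proof
      fix X assume X: "X \<in> G"
      have h1: "\<forall>l<k. \<bar>s X l - real D/2\<bar> < real D/4" using X by (simp add: G_def)
      have h3: "\<bar>2 * a X j l - s X l\<bar> \<le> t * s X l" if jl: "j < k" "l < k" "j \<noteq> l" for j l
      proof -
        have a1: "\<bar>a X j l - real D/4\<bar> < t * real D/16" using X jl by (simp add: G_def)
        have a2: "\<bar>s X l - real D/2\<bar> < t * real D/16" using X jl by (simp add: G_def)
        have "\<bar>s X l - real D/2\<bar> < real D/4" using h1 jl by blast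
        then have a3: "s X l > real D / 4" by linarith
        have "t * (real D / 4) \<le> t * s X l" using a3 t0 by (intro mult_left_mono) auto
        then show ?thesis using a1 a2 by (simp add: abs_if split: if_splits)
      qed
      show "X \<in> T"
        unfolding T_def mem_Collect_eq
      proof (intro allI impI)
        fix \<delta> assume "64 * sqrt (ln (real k) / real D) \<le> \<delta>"
        then have d: "t \<le> \<delta>" by (simp add: t_def)
        show "feasible D k (matA D X) \<delta> \<noteq> {} \<and> 1 - \<delta> \<le> lambda_delta D k (matA D X) \<delta> \<and> lambda_delta D k (matA D X) \<delta> \<le> 1"
          by (rule determ[OF kpos Dpos t0 d]) (use h1 h3 in \<open>auto simp: s_def a_def\<close>)
      qed
    qed
    define E1 where "E1 l = {X. real D/4 \<le> \<bar>(\<Sum>i<D. of_bool (X(l,i))::real) - real D/2\<bar>}" for l :: nat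
    define E2 where "E2 l = {X. t * real D/16 \<le> \<bar>(\<Sum>i<D. of_bool (X(l,i))::real) - real D/2\<bar>}" for l :: nat
    define E3 where "E3 p = {X. t * real D/16 \<le> \<bar>(\<Sum>i<D. of_bool (X(snd p,i)) * of_bool (X(fst p,i))::real) - real D/4\<bar>}" for p :: "nat \<times> nat"
    define P where "P = {p \<in> {..<k}\<times>{..<k}. fst p \<noteq> snd p}"
    have finP: "finite P" by (simp add: P_def)
    have cardP: "real (card P) \<le> real k * real k"
    proof -
      have "card P \<le> card ({..<k}\<times>{..<k})" by (rule card_mono) (auto simp: P_def)
      then show ?thesis by (simp flip: of_nat_mult)
    qed
    have bad: "UNIV - G \<subseteq> (\<Union>l\<in>{..<k}. E1 l) \<union> (\<Union>l\<in>{..<k}. E2 l) \<union> (\<Union>p\<in>P. E3 p)"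
    proof
      fix X assume "X \<in> UNIV - G"
      then show "X \<in> (\<Union>l\<in>{..<k}. E1 l) \<union> (\<Union>l\<in>{..<k}. E2 l) \<union> (\<Union>p\<in>P. E3 p)"
        unfolding G_def E1_def E2_def E3_def P_def s_def a_def by (auto simp: not_less)
    qed
    have b1: "measure_pmf.prob ?M (E1 l) \<le> 4 / real k ^ 3" if "l \<in> {..<k}" for l
    proof -
      have "measure_pmf.prob ?M (E1 l) \<le> 2 * exp (-2*(real D/4)^2/real D)"
        unfolding E1_def by (rule E1) (use that Dpos in auto)
      also have "-2*(real D/4)^2/real D = - (real D / 8)" using Dpos by (simp add: power2_eq_square field_simps)
      also have "exp (- (real D / 8)) \<le> 2 / real k ^ 3" by (rule expk[OF kpos]) (use Dk lnk in auto)
      finally show ?thesis by simp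
    qed
    have ee: "exp (-2*(t * real D/16)^2/real D) \<le> 2 / real k ^ 3"
    proof -
      have "-2*(t * real D/16)^2/real D = - ((t^2 * real D) / 128)" using Dpos by (simp add: power2_eq_square field_simps)
      also have "\<dots> = - (32 * ln (real k))" by (simp add: tsq)
      finally show ?thesis by (simp only:) (rule expk[OF kpos], use lnk in auto)
    qed
    have b2: "measure_pmf.prob ?M (E2 l) \<le> 4 / real k ^ 3" if "l \<in> {..<k}" for l
    proof -
      have "measure_pmf.prob ?M (E2 l) \<le> 2 * exp (-2*(t * real D/16)^2/real D)"
        unfolding E2_def by (rule E1) (use that Dpos t0 in auto)
      then show ?thesis using ee by simp
    qed
    have b3: "measure_pmf.prob ?M (E3 p) \<le> 4 / real k ^ 3" if "p \<in> P" for p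
    proof -
      have "measure_pmf.prob ?M (E3 p) \<le> 2 * exp (-2*(t * real D/16)^2/real D)"
        unfolding E3_def by (rule E3) (use that Dpos t0 in \<open>auto simp: P_def\<close>)
      then show ?thesis using ee by simp
    qed
    have "measure_pmf.prob ?M (UNIV - G) \<le> measure_pmf.prob ?M ((\<Union>l\<in>{..<k}. E1 l) \<union> (\<Union>l\<in>{..<k}. E2 l) \<union> (\<Union>p\<in>P. E3 p))"
      by (rule measure_pmf.finite_measure_mono[OF bad]) simp
    also have "\<dots> \<le> measure_pmf.prob ?M ((\<Union>l\<in>{..<k}. E1 l) \<union> (\<Union>l\<in>{..<k}. E2 l)) + measure_pmf.prob ?M (\<Union>p\<in>P. E3 p)"
      by (rule measure_Un_le) simp_all
    also have "\<dots> \<le> (measure_pmf.prob ?M (\<Union>l\<in>{..<k}. E1 l) + measure_pmf.prob ?M (\<Union>l\<in>{..<k}. E2 l)) + measure_pmf.prob ?M (\<Union>p\<in>P. E3 p)"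
      by (intro add_right_mono measure_Un_le) simp_all
    also have "\<dots> \<le> ((\<Sum>l\<in>{..<k}. measure_pmf.prob ?M (E1 l)) + (\<Sum>l\<in>{..<k}. measure_pmf.prob ?M (E2 l))) + (\<Sum>p\<in>P. measure_pmf.prob ?M (E3 p))"
      by (intro add_mono measure_pmf.finite_measure_subadditive_finite finP) simp_all
    also have "\<dots> \<le> ((\<Sum>l\<in>{..<k}. 4 / real k ^ 3) + (\<Sum>l\<in>{..<k}. 4 / real k ^ 3)) + (\<Sum>p\<in>P. 4 / real k ^ 3)"
      by (intro add_mono sum_mono b1 b2 b3)
    also have "\<dots> = 8 * real k / real k ^ 3 + real (card P) * 4 / real k ^ 3" by simp
    also have "\<dots> \<le> 8 * real k / real k ^ 3 + real k * real k * 4 / real k ^ 3"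
      using cardP by (intro add_left_mono divide_right_mono) auto
    also have "\<dots> = 8 / (real k * real k) + 4 / real k" using kpos by (simp add: field_simps power3_eq_cube)
    also have "8 / (real k * real k) + 4 / real k \<le> 12 / real k"
    proof -
      have "8 / (real k * real k) \<le> 8 / real k"
        using kpos by (intro divide_left_mono) (auto simp: mult_pos_pos)
      then show ?thesis by simp
    qed
    finally have pb: "measure_pmf.prob ?M (UNIV - G) \<le> 12 / real k" .
    have "measure_pmf.prob ?M (UNIV - G) = 1 - measure_pmf.prob ?M G"
      using measure_pmf.prob_compl[of G ?M] by simp
    then have "1 - \<epsilon> \<le> measure_pmf.prob ?M G" using pb keps by linarith
    also have "\<dots> \<le> measure_pmf.prob ?M T" by (rule measure_pmf.finite_measure_mono[OF GT]) simp
    finally show "1 - \<epsilon> \<le> measure_pmf.prob ?M T" .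
  qed
qed simp

end
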